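(* Let $(\mathbb{V},\Omega)$ be a base-normed space with closed cone $K$ and base $\Omega$, and let $\Omega_o$ be a closed convex subset of $\Omega$. Then the cone $K_o=\{ta:a\in\Omega_o,t\ge0\}$ generated by $\Omega_o$ is closed. Moreover, if $\mathbb{V}$ is complete in its base norm, then $\mathbb{V}_o=K_o-K_o$ is complete in the base norm generated by $\Omega_o$.
   Context: A base-normed space $(\mathbb{V},\Omega)$: $\Omega$ is a convex subset of a real vector space such that every nonzero element of $K=\{t\alpha:t\ge0,\alpha\in\Omega\}$ has a unique representation $t\alpha$, $t>0$, $\alpha\in\Omega$ (equivalently there is a linear functional $u$ with $u\equiv1$ on $\Omega$); $\mathbb{V}=K-K$; and the Minkowski functional $\|x\|=\inf\{t\ge0:x\in t\,\mathrm{conv}(\Omega\cup-\Omega)\}$ is a norm (the base norm). Closedness refers to the base-norm topology of $\mathbb{V}$. The base norm generated by $\Omega_o$ on $\mathbb{V}_o$ is the Minkowski functional of $\mathrm{conv}(\Omega_o\cup-\Omega_o)$. *)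

theory Defs
  imports "HOL-Analysis.Analysis"
begin

definition gen_cone :: "'v::real_vector set \<Rightarrow> 'v set" where
  "gen_cone S = {t *\<^sub>R a | t a. a \<in> S \<and> t \<ge> 0}"

definition minkowski :: "'v::real_vector set \<Rightarrow> 'v \<Rightarrow> real" where
  "minkowski C x = Inf {t. t \<ge> 0 \<and> x \<in> (\<lambda>y. t *\<^sub>R y) ` C}"

definition base_norm :: "'v::real_vector set \<Rightarrow> 'v \<Rightarrow> real" where
  "base_norm \<Omega> = minkowski (convex hull (\<Omega> \<union> uminus ` \<Omega>))"

text \<open>A base-normed space: the whole (normed) type is \<open>\<V>\<close>, its norm is the base norm of \<open>\<Omega>\<close>.\<close>
definition base_normed_space :: "'v::real_normed_vector set \<Rightarrow> bool" where
  "base_normed_space \<Omega> \<longleftrightarrow>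
     convex \<Omega> \<and>
     (\<forall>x \<in> gen_cone \<Omega> - {0}. \<exists>!p. fst p > 0 \<and> snd p \<in> \<Omega> \<and> x = fst p *\<^sub>R snd p) \<and>
     UNIV = {a - b | a b. a \<in> gen_cone \<Omega> \<and> b \<in> gen_cone \<Omega>} \<and>
     (\<forall>x. norm x = base_norm \<Omega> x)"

definition complete_wrt :: "('v::real_vector \<Rightarrow> real) \<Rightarrow> 'v set \<Rightarrow> bool" where
  "complete_wrt N S \<longleftrightarrow>
     (\<forall>x. (\<forall>n. x n \<in> S) \<and> (\<forall>e>0. \<exists>M. \<forall>m\<ge>M. \<forall>n\<ge>M. N (x m - x n) < e)
        \<longrightarrow> (\<exists>y\<in>S. (\<lambda>n. N (x n - y)) \<longlonglongrightarrow> 0))"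

end

theory Submission
  imports Defs
begin


lemma cone_comb:
  fixes S :: "'v::real_vector set"
  assumes "convex S" "s \<in> S" "s' \<in> S" "0 \<le> a" "0 \<le> b"
  shows "\<exists>s''\<in>S. a *\<^sub>R s + b *\<^sub>R s' = (a+b) *\<^sub>R s''"
proof (cases "a + b = 0")
  case True
  then have "a = 0" "b = 0" using assms by auto
  then show ?thesis using assms by auto
next
  case False
  then have pos: "a + b > 0" using assms by auto
  let ?s = "(a/(a+b)) *\<^sub>R s + (b/(a+b)) *\<^sub>R s'"
  have "?s \<in> S"
    by (rule convexD[OF assms(1-3)]) (use assms pos in \<open>auto simp: add_divide_distrib[symmetric]\<close>)
  moreover have "a *\<^sub>R s + b *\<^sub>R s' = (a+b) *\<^sub>R ?s"
    using pos by (simp add: scaleR_add_right)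
  ultimately show ?thesis by blast
qed

lemma hull_sub:
  fixes S :: "'v::real_vector set"
  assumes "convex S"
  shows "convex hull (S \<union> uminus ` S) \<subseteq>
    {u *\<^sub>R s - v *\<^sub>R t | u v s t. 0 \<le> u \<and> 0 \<le> v \<and> u + v = 1 \<and> s \<in> S \<and> t \<in> S}"
    (is "_ \<subseteq> ?T")
proof (rule hull_minimal)
  show "S \<union> uminus ` S \<subseteq> ?T"
  proof
    fix x assume "x \<in> S \<union> uminus ` S"
    then show "x \<in> ?T"
    proof
      assume "x \<in> S"
      moreover have "x = 1 *\<^sub>R x - 0 *\<^sub>R x" by simp
      ultimately show ?thesis by fastforce
    next
      assume "x \<in> uminus ` S"
      then obtain s where "s \<in> S" "x = - s" by auto
      moreover have "- s = 0 *\<^sub>R s - 1 *\<^sub>R s" by simp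
      ultimately show ?thesis by fastforce
    qed
  qed
  show "convex ?T"
    unfolding convex_def
  proof (intro ballI allI impI)
    fix x y and a b :: real
    assume "x \<in> ?T" "y \<in> ?T" "0 \<le> a" "0 \<le> b" "a + b = 1"
    then obtain u v s t u' v' s' t' where
      x: "x = u *\<^sub>R s - v *\<^sub>R t" "0 \<le> u" "0 \<le> v" "u + v = 1" "s \<in> S" "t \<in> S" and
      y: "y = u' *\<^sub>R s' - v' *\<^sub>R t'" "0 \<le> u'" "0 \<le> v'" "u' + v' = 1" "s' \<in> S" "t' \<in> S"
      by blast
    obtain s'' where s'': "s'' \<in> S" "(a*u) *\<^sub>R s + (b*u') *\<^sub>R s' = (a*u + b*u') *\<^sub>R s''"
      using cone_comb[OF assms x(5) y(5), of "a*u" "b*u'"] x y \<open>0 \<le> a\<close> \<open>0 \<le> b\<close> by auto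
    obtain t'' where t'': "t'' \<in> S" "(a* v) *\<^sub>R t + (b* v') *\<^sub>R t' = (a* v + b* v') *\<^sub>R t''"
      using cone_comb[OF assms x(6) y(6), of "a* v" "b* v'"] x y \<open>0 \<le> a\<close> \<open>0 \<le> b\<close> by auto
    have "a *\<^sub>R x + b *\<^sub>R y = ((a*u) *\<^sub>R s + (b*u') *\<^sub>R s') - ((a* v) *\<^sub>R t + (b* v') *\<^sub>R t')"
      unfolding x(1) y(1) by (simp add: algebra_simps scaleR_diff_right)
    also have "\<dots> = (a*u + b*u') *\<^sub>R s'' - (a* v + b* v') *\<^sub>R t''" using s'' t'' by simp
    finally have e: "a *\<^sub>R x + b *\<^sub>R y = (a*u + b*u') *\<^sub>R s'' - (a* v + b* v') *\<^sub>R t''" .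
    have "(a*u + b*u') + (a* v + b* v') = a*(u+v) + b*(u'+v')" by (simp add: algebra_simps)
    then have "(a*u + b*u') + (a* v + b* v') = 1" using x y \<open>a+b=1\<close> by simp
    then show "a *\<^sub>R x + b *\<^sub>R y \<in> ?T"
      using e s'' t'' x y \<open>0 \<le> a\<close> \<open>0 \<le> b\<close> by (intro CollectI exI[of _ "a*u + b*u'"] exI[of _ "a* v + b* v'"]) auto
  qed
qed

lemma D_mem:
  fixes S :: "'v::real_vector set"
  assumes "a \<in> S" "b \<in> S" "0 \<le> s" "0 \<le> r"
  shows "s + r \<in> {t. t \<ge> 0 \<and> s *\<^sub>R a - r *\<^sub>R b \<in> (\<lambda>y. t *\<^sub>R y) ` (convex hull (S \<union> uminus ` S))}"
proof -
  let ?C = "convex hull (S \<union> uminus ` S)"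
  have aC: "a \<in> ?C" and bC: "- b \<in> ?C" using assms by (auto intro: hull_inc)
  show ?thesis
  proof (cases "s + r = 0")
    case True
    then have "s = 0" "r = 0" using assms by auto
    then show ?thesis using aC by (auto intro!: image_eqI[of _ _ a])
  next
    case False
    then have pos: "s + r > 0" using assms by auto
    let ?c = "(s/(s+r)) *\<^sub>R a + (r/(s+r)) *\<^sub>R (- b)"
    have "?c \<in> ?C"
      by (rule convexD[OF convex_convex_hull aC bC]) (use assms pos in \<open>auto simp: add_divide_distrib[symmetric]\<close>)
    moreover have "s *\<^sub>R a - r *\<^sub>R b = (s + r) *\<^sub>R ?c" using pos by (simp add: scaleR_add_right scaleR_diff_right)
    ultimately show ?thesis using pos by auto
  qed
qed

lemma bn_le:
  fixes S :: "'v::real_vector set"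
  assumes "a \<in> S" "b \<in> S" "0 \<le> s" "0 \<le> r"
  shows "base_norm S (s *\<^sub>R a - r *\<^sub>R b) \<le> s + r"
  unfolding base_norm_def minkowski_def
  by (rule cInf_lower[OF D_mem[OF assms]]) (auto simp: bdd_below_def)

lemma bn_ge0:
  fixes S :: "'v::real_vector set"
  assumes "a \<in> S" "b \<in> S" "0 \<le> s" "0 \<le> r"
  shows "0 \<le> base_norm S (s *\<^sub>R a - r *\<^sub>R b)"
  unfolding base_norm_def minkowski_def
  by (rule cInf_greatest) (use D_mem[OF assms] in auto)

lemma bn_lt:
  fixes S :: "'v::real_vector set"
  assumes "convex S" "a \<in> S" "b \<in> S" "0 \<le> s" "0 \<le> r"
    and "base_norm S (s *\<^sub>R a - r *\<^sub>R b) < e"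
  shows "\<exists>u v a' b'. a' \<in> S \<and> b' \<in> S \<and> 0 \<le> u \<and> 0 \<le> v \<and> u + v < e \<and>
           s *\<^sub>R a - r *\<^sub>R b = u *\<^sub>R a' - v *\<^sub>R b'"
proof -
  let ?x = "s *\<^sub>R a - r *\<^sub>R b"
  obtain t where t: "t \<ge> 0" "t < e" "?x \<in> (\<lambda>y. t *\<^sub>R y) ` (convex hull (S \<union> uminus ` S))"
    using cInf_lessD[OF _ assms(6)[unfolded base_norm_def minkowski_def]] D_mem[OF assms(2-5)]
    by blast
  then obtain c where c: "c \<in> convex hull (S \<union> uminus ` S)" "?x = t *\<^sub>R c" by auto
  then obtain u v p q where uv: "c = u *\<^sub>R p - v *\<^sub>R q" "0 \<le> u" "0 \<le> v" "u + v = 1" "p \<in> S" "q \<in> S"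
    using hull_sub[OF assms(1)] by blast
  have "?x = (t * u) *\<^sub>R p - (t * v) *\<^sub>R q" using c uv by (simp add: algebra_simps)
  moreover have "t * u + t * v < e" using uv t by (simp add: distrib_left[symmetric])
  ultimately show ?thesis using uv t by (intro exI[of _ "t * u"] exI[of _ "t * v"] exI[of _ p] exI[of _ q]) auto
qed



lemma ex1_uniq: "\<exists>!x. P x \<Longrightarrow> P a \<Longrightarrow> P b \<Longrightarrow> a = b" by blast

lemma gen_cone_add:
  assumes "convex S" "p \<in> gen_cone S" "q \<in> gen_cone S"
  shows "p + q \<in> gen_cone S"
proof -
  obtain s a r b where "p = s *\<^sub>R a" "a \<in> S" "s \<ge> 0" "q = r *\<^sub>R b" "b \<in> S" "r \<ge> 0"
    using assms unfolding gen_cone_def by blast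
  then show ?thesis using cone_comb[OF assms(1), of a b s r] unfolding gen_cone_def
    by (metis (mono_tags, lifting) add_nonneg_nonneg mem_Collect_eq)
qed

lemma trivial_case:
  fixes \<Omega> :: "'v::real_normed_vector set"
  assumes "base_normed_space \<Omega>" "0 \<in> \<Omega>"
  shows "x = (0::'v)"
proof -
  have conv: "convex \<Omega>" and uniq: "\<forall>x \<in> gen_cone \<Omega> - {0}. \<exists>!p. fst p > 0 \<and> snd p \<in> \<Omega> \<and> x = fst p *\<^sub>R snd p"
    and span: "UNIV = {a - b | a b. a \<in> gen_cone \<Omega> \<and> b \<in> gen_cone \<Omega>}"
    using assms(1) unfolding base_normed_space_def by auto
  have sub: "\<alpha> = 0" if "\<alpha> \<in> \<Omega>" for \<alpha>
  proof (rule ccontr)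
    assume nz: "\<alpha> \<noteq> 0"
    have h: "(1/2) *\<^sub>R \<alpha> + (1/2) *\<^sub>R (0::'v) \<in> \<Omega>"
      by (rule convexD[OF conv that assms(2)]) auto
    have "\<alpha> \<in> gen_cone \<Omega> - {0}" unfolding gen_cone_def using that nz
      by (auto intro!: exI[of _ 1] exI[of _ \<alpha>])
    then have ex1: "\<exists>!p. fst p > 0 \<and> snd p \<in> \<Omega> \<and> \<alpha> = fst p *\<^sub>R snd p" using uniq by blast
    have "(1::real, \<alpha>) = (2, (1/2) *\<^sub>R \<alpha>)"
      by (rule ex1_uniq[OF ex1]) (use that h in auto)
    then show False by simp
  qed
  have "x \<in> UNIV" by simp
  then obtain a b where "x = a - b" "a \<in> gen_cone \<Omega>" "b \<in> gen_cone \<Omega>" using span by blast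
  then show ?thesis unfolding gen_cone_def using sub by (auto dest!: sub)
qed

lemma norm_one:
  fixes \<Omega> :: "'v::real_normed_vector set"
  assumes "base_normed_space \<Omega>" "0 \<notin> \<Omega>" "\<alpha> \<in> \<Omega>"
  shows "norm \<alpha> = 1"
proof -
  have conv: "convex \<Omega>" and uniq: "\<forall>x \<in> gen_cone \<Omega> - {0}. \<exists>!p. fst p > 0 \<and> snd p \<in> \<Omega> \<and> x = fst p *\<^sub>R snd p"
    and nrm: "\<forall>x. norm x = base_norm \<Omega> x"
    using assms(1) unfolding base_normed_space_def by auto
  have "norm \<alpha> \<le> 1" using bn_le[OF assms(3) assms(3), of 1 0] nrm by simp
  moreover have "\<not> norm \<alpha> < 1"
  proof
    assume "norm \<alpha> < 1"
    then have "base_norm \<Omega> (1 *\<^sub>R \<alpha> - 0 *\<^sub>R \<alpha>) < 1" using nrm by simp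
    then obtain u v a b where uv: "a \<in> \<Omega>" "b \<in> \<Omega>" "0 \<le> u" "0 \<le> v" "u + v < 1"
       "1 *\<^sub>R \<alpha> - 0 *\<^sub>R \<alpha> = u *\<^sub>R a - v *\<^sub>R b"
      using bn_lt[OF conv assms(3) assms(3), of 1 0 1] by auto
    obtain w where w: "w \<in> \<Omega>" "1 *\<^sub>R \<alpha> + v *\<^sub>R b = (1 + v) *\<^sub>R w"
      using cone_comb[OF conv assms(3) uv(2), of 1 v] uv by auto
    have eq: "u *\<^sub>R a = (1 + v) *\<^sub>R w" using w uv by (simp add: algebra_simps)
    have "w \<noteq> 0" using w assms(2) by auto
    then have nz: "u *\<^sub>R a \<noteq> 0" using eq uv by auto
    then have upos: "u > 0" using uv by (cases "u = 0") auto
    have "u *\<^sub>R a \<in> gen_cone \<Omega> - {0}" unfolding gen_cone_def using uv nz by auto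
    then have ex1: "\<exists>!p. fst p > 0 \<and> snd p \<in> \<Omega> \<and> u *\<^sub>R a = fst p *\<^sub>R snd p" using uniq by blast
    have "(u, a) = (1 + v, w)"
      by (rule ex1_uniq[OF ex1]) (use uv upos w eq in auto)
    then show False using uv by auto
  qed
  ultimately show ?thesis by simp
qed



lemma normK:
  fixes \<Omega> :: "'v::real_normed_vector set"
  assumes "base_normed_space \<Omega>" "0 \<notin> \<Omega>" "a \<in> \<Omega>" "0 \<le> s"
  shows "norm (s *\<^sub>R a) = s"
  using norm_one[OF assms(1-3)] assms(4) by simp

lemma closed_part:
  fixes \<Omega> \<Omega>o :: "'v::real_normed_vector set"
  assumes bns: "base_normed_space \<Omega>" and n0: "0 \<notin> \<Omega>" and sub: "\<Omega>o \<subseteq> \<Omega>" and cl: "closed \<Omega>o"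
  shows "closed (gen_cone \<Omega>o)"
  unfolding closed_sequential_limits
proof (intro allI impI, elim conjE)
  fix x l
  assume xin: "\<forall>n. x n \<in> gen_cone \<Omega>o" and lim: "x \<longlonglongrightarrow> l"
  have "\<forall>n. \<exists>p. x n = fst p *\<^sub>R snd p \<and> snd p \<in> \<Omega>o \<and> fst p \<ge> 0"
    using xin unfolding gen_cone_def by force
  then obtain f where f: "\<forall>n. x n = fst (f n) *\<^sub>R snd (f n) \<and> snd (f n) \<in> \<Omega>o \<and> fst (f n) \<ge> 0"
    by (rule choice[THEN exE]) blast
  define t where "t n = fst (f n)" for n
  define a where "a n = snd (f n)" for n
  have ta: "\<And>n. x n = t n *\<^sub>R a n" "\<And>n. a n \<in> \<Omega>o" "\<And>n. t n \<ge> 0"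
    using f unfolding t_def a_def by auto
  have nx: "norm (x n) = t n" for n using normK[OF bns n0, of "a n" "t n"] ta sub by auto
  show "l \<in> gen_cone \<Omega>o"
  proof (cases "l = 0")
    case True
    then show ?thesis unfolding gen_cone_def using ta(2)[of 0]
      by (intro CollectI exI[of _ 0] exI[of _ "a 0"]) simp
  next
    case False
    then have lpos: "norm l > 0" by simp
    have nlim: "(\<lambda>n. norm (x n)) \<longlonglongrightarrow> norm l" using lim by (rule tendsto_norm)
    have ev: "eventually (\<lambda>n. norm (x n) > 0) sequentially"
      using order_tendstoD(1)[OF nlim lpos] .
    have lim2: "(\<lambda>n. (1 / norm (x n)) *\<^sub>R x n) \<longlonglongrightarrow> (1 / norm l) *\<^sub>R l"
      by (intro tendsto_intros lim nlim) (use lpos in auto)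
    have ev2: "eventually (\<lambda>n. (1 / norm (x n)) *\<^sub>R x n \<in> \<Omega>o) sequentially"
      using ev
    proof (rule eventually_mono)
      fix n assume "norm (x n) > 0"
      then have "(1 / norm (x n)) *\<^sub>R x n = a n" using nx[of n] ta(1)[of n] by simp
      then show "(1 / norm (x n)) *\<^sub>R x n \<in> \<Omega>o" using ta(2) by simp
    qed
    have "(1 / norm l) *\<^sub>R l \<in> \<Omega>o"
      by (rule Lim_in_closed_set[OF cl ev2 _ lim2]) simp
    moreover have "l = norm l *\<^sub>R ((1 / norm l) *\<^sub>R l)" using lpos by simp
    ultimately show ?thesis unfolding gen_cone_def
      by (intro CollectI exI[of _ "norm l"] exI[of _ "(1 / norm l) *\<^sub>R l"]) simp
  qed
qed



lemma complete_part:
  fixes \<Omega> \<Omega>o :: "'v::real_normed_vector set"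
  assumes bns: "base_normed_space \<Omega>" and n0: "0 \<notin> \<Omega>" and sub: "\<Omega>o \<subseteq> \<Omega>"
    and cvx: "convex \<Omega>o" and clK: "closed (gen_cone \<Omega>o)" and compl: "complete (UNIV :: 'v set)"
  shows "complete_wrt (base_norm \<Omega>o) {a - b | a b. a \<in> gen_cone \<Omega>o \<and> b \<in> gen_cone \<Omega>o}"
  unfolding complete_wrt_def
proof (intro allI impI, elim conjE)
  define K where "K = gen_cone \<Omega>o"
  define N where "N = base_norm \<Omega>o"
  define V where "V = {a - b | a b. a \<in> K \<and> b \<in> K}"
  fix x :: "nat \<Rightarrow> 'v"
  assume xin0: "\<forall>n. x n \<in> {a - b | a b. a \<in> gen_cone \<Omega>o \<and> b \<in> gen_cone \<Omega>o}"
    and cau0: "\<forall>e>0. \<exists>M. \<forall>m\<ge>M. \<forall>n\<ge>M. base_norm \<Omega>o (x m - x n) < e"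
  have xin: "\<And>n. x n \<in> V" using xin0 unfolding V_def K_def by blast
  have cau: "\<forall>e>0. \<exists>M. \<forall>m\<ge>M. \<forall>n\<ge>M. N (x m - x n) < e" using cau0 unfolding N_def .
  have Kadd: "p + q \<in> K" if pqK: "p \<in> K" "q \<in> K" for p q
    using gen_cone_add[OF cvx] that unfolding K_def by blast
  have Kdecomp: "\<exists>s a. p = s *\<^sub>R a \<and> a \<in> \<Omega>o \<and> s = norm p \<and> s \<ge> 0" if pK: "p \<in> K" for p
  proof -
    obtain s a where "p = s *\<^sub>R a" "a \<in> \<Omega>o" "s \<ge> 0" using pK unfolding K_def gen_cone_def by blast
    moreover then have "norm p = s" using normK[OF bns n0, of a s] sub by auto
    ultimately show ?thesis by metis
  qed
  have P1: "N (p - q) \<le> norm p + norm q" if pqK: "p \<in> K" "q \<in> K" for p q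
    using Kdecomp[OF pqK(1)] Kdecomp[OF pqK(2)] bn_le[of _ \<Omega>o] unfolding N_def by metis
  have P3: "0 \<le> N (p - q)" if pqK: "p \<in> K" "q \<in> K" for p q
    using Kdecomp[OF pqK(1)] Kdecomp[OF pqK(2)] bn_ge0[of _ \<Omega>o] unfolding N_def by metis
  have P2: "\<exists>p' q'. p' \<in> K \<and> q' \<in> K \<and> p - q = p' - q' \<and> norm p' + norm q' < e"
    if pqK: "p \<in> K" "q \<in> K" "N (p - q) < e" for p q e
  proof -
    obtain s a r b where sa: "p = s *\<^sub>R a" "a \<in> \<Omega>o" "s \<ge> 0" and rb: "q = r *\<^sub>R b" "b \<in> \<Omega>o" "r \<ge> 0"
      using Kdecomp[OF pqK(1)] Kdecomp[OF pqK(2)] by blast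
    obtain u v a' b' where uv: "a' \<in> \<Omega>o" "b' \<in> \<Omega>o" "0 \<le> u" "0 \<le> v" "u + v < e"
      "s *\<^sub>R a - r *\<^sub>R b = u *\<^sub>R a' - v *\<^sub>R b'"
      using bn_lt[OF cvx sa(2) rb(2) sa(3) rb(3), of e] pqK(3) sa rb unfolding N_def by blast
    have "u *\<^sub>R a' \<in> K" "v *\<^sub>R b' \<in> K" unfolding K_def gen_cone_def using uv by blast+
    moreover have "norm (u *\<^sub>R a') = u" "norm (v *\<^sub>R b') = v"
      using normK[OF bns n0] uv sub by auto
    ultimately show ?thesis using uv sa rb by metis
  qed
  have Vdiff: "\<exists>p q. p \<in> K \<and> q \<in> K \<and> u - w = p - q" if uw: "u \<in> V" "w \<in> V" for u w
  proof -
    obtain a b c d where "u = a - b" "w = c - d" "a \<in> K" "b \<in> K" "c \<in> K" "d \<in> K"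
      using uw unfolding V_def by blast
    then show ?thesis by (intro exI[of _ "a + d"] exI[of _ "b + c"]) (auto intro: Kadd)
  qed
  show "\<exists>y\<in>{a - b | a b. a \<in> gen_cone \<Omega>o \<and> b \<in> gen_cone \<Omega>o}. (\<lambda>n. base_norm \<Omega>o (x n - y)) \<longlonglongrightarrow> 0"
  proof -
    have "\<forall>k. \<exists>M. \<forall>m\<ge>M. \<forall>n\<ge>M. N (x m - x n) < (1/2::real)^k" using cau by simp
    then obtain M where M: "\<And>k m n. m \<ge> M k \<Longrightarrow> n \<ge> M k \<Longrightarrow> N (x m - x n) < (1/2::real)^k"
      by metis
    define \<phi> where "\<phi> k = (\<Sum>j\<le>k. M j)" for k
    have \<phi>M: "M k \<le> \<phi> k" for k unfolding \<phi>_def by (rule member_le_sum) auto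
    have \<phi>mono: "\<phi> k \<le> \<phi> l" if "k \<le> l" for k l
      using that unfolding \<phi>_def by (intro sum_mono2) auto
    have subq: "N (x n - x (\<phi> k)) < (1/2)^k" if "n \<ge> \<phi> k" for n k
      using M[of k n "\<phi> k"] \<phi>M[of k] that by simp
    have "\<forall>k. \<exists>pq. fst pq \<in> K \<and> snd pq \<in> K \<and> x (\<phi> (Suc k)) - x (\<phi> k) = fst pq - snd pq
             \<and> norm (fst pq) + norm (snd pq) < (1/2)^k"
    proof
      fix k
      obtain a b where ab: "a \<in> K" "b \<in> K" "x (\<phi> (Suc k)) - x (\<phi> k) = a - b"
        using Vdiff[OF xin xin] by blast
      have "N (a - b) < (1/2)^k" using subq[of k "\<phi> (Suc k)"] \<phi>mono[of k "Suc k"] ab by simp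
      then obtain p' q' where "p' \<in> K" "q' \<in> K" "a - b = p' - q'" "norm p' + norm q' < (1/2)^k"
        using P2[OF ab(1,2)] by blast
      then show "\<exists>pq. fst pq \<in> K \<and> snd pq \<in> K \<and> x (\<phi> (Suc k)) - x (\<phi> k) = fst pq - snd pq
             \<and> norm (fst pq) + norm (snd pq) < (1/2)^k" using ab by (intro exI[of _ "(p', q')"]) simp
    qed
    then obtain g where g: "\<And>k. fst (g k) \<in> K \<and> snd (g k) \<in> K \<and> x (\<phi> (Suc k)) - x (\<phi> k) = fst (g k) - snd (g k)
             \<and> norm (fst (g k)) + norm (snd (g k)) < (1/2)^k"
      by metis
    define p where "p k = fst (g k)" for k
    define q where "q k = snd (g k)" for k
    have pK: "p k \<in> K" and qK: "q k \<in> K" and pq: "x (\<phi> (Suc k)) - x (\<phi> k) = p k - q k"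
      and pn: "norm (p k) \<le> (1/2)^k" and qn: "norm (q k) \<le> (1/2)^k" for k
      unfolding p_def q_def using g[of k] by auto (smt (verit) norm_ge_zero)+
    define P where "P n = (\<Sum>i<n. p i)" for n
    define Q where "Q n = (\<Sum>i<n. q i)" for n
    have tailgen: "\<And>k m. F (k + m) - F k \<in> K \<and> norm (F (k + m) - F k) \<le> 2 * (1/2)^k - 2 * (1/2)^(k+m)"
      if Fdef: "\<And>n. F n = (\<Sum>i<n. f i)" and fK: "\<And>k. f k \<in> K" and fn: "\<And>k. norm (f k) \<le> (1/2)^k"
      for F f
    proof -
      fix k m
      show "F (k + m) - F k \<in> K \<and> norm (F (k + m) - F k) \<le> 2 * (1/2)^k - 2 * (1/2)^(k+m)"
      proof (induction m)
        case 0
        obtain c where "c \<in> \<Omega>o" using xin[of 0] unfolding V_def K_def gen_cone_def by blast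
        then have "0 \<in> K" unfolding K_def gen_cone_def
          by (intro CollectI exI[of _ 0] exI[of _ c]) simp
        then show ?case by simp
      next
        case (Suc m)
        have eq: "F (k + Suc m) - F k = (F (k + m) - F k) + f (k + m)" using Fdef by simp
        have "F (k + Suc m) - F k \<in> K" unfolding eq using Suc.IH Kadd fK by blast
        moreover have "norm (F (k + Suc m) - F k) \<le> norm (F (k + m) - F k) + norm (f (k + m))"
          unfolding eq by (rule norm_triangle_ineq)
        moreover have "norm (F (k + m) - F k) + norm (f (k + m)) \<le> 2 * (1/2)^k - 2 * (1/2)^(k+ Suc m)"
          using Suc fn[of "k+m"] by simp
        ultimately show ?case by linarith
      qed
    qed
    have Ptail: "P (k + m) - P k \<in> K \<and> norm (P (k + m) - P k) \<le> 2 * (1/2)^k - 2 * (1/2)^(k+m)" for k m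
      by (rule tailgen[OF P_def pK pn])
    have Qtail: "Q (k + m) - Q k \<in> K \<and> norm (Q (k + m) - Q k) \<le> 2 * (1/2)^k - 2 * (1/2)^(k+m)" for k m
      by (rule tailgen[OF Q_def qK qn])
    have cauchy_gen: "Cauchy F"
      if tl: "\<And>k m. norm (F (k + m) - F k) \<le> 2 * (1/2::real)^k - 2 * (1/2)^(k+m)" for F :: "nat \<Rightarrow> 'v"
      unfolding Cauchy_def
    proof (intro allI impI)
      fix e :: real assume "e > 0"
      then obtain L where L: "(1/2::real)^L < e/2" using real_arch_pow_inv[of "e/2" "1/2"] by auto
      have bnd: "dist (F m) (F n) < e" if "m \<ge> L" "n \<ge> L" "n \<le> m" for m n
      proof -
        have "dist (F m) (F n) = norm (F (n + (m - n)) - F n)" using that by (simp add: dist_norm)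
        also have "\<dots> \<le> 2 * (1/2)^n" using tl[of n "m - n"] zero_le_power[of "1/2::real" "n + (m - n)"] by linarith
        also have "\<dots> \<le> 2 * (1/2)^L" using that by (simp add: power_decreasing)
        finally show ?thesis using L by simp
      qed
      show "\<exists>M. \<forall>m\<ge>M. \<forall>n\<ge>M. dist (F m) (F n) < e"
      proof (intro exI allI impI)
        fix m n assume "m \<ge> L" "n \<ge> L"
        then show "dist (F m) (F n) < e"
          using bnd[of m n] bnd[of n m] by (cases "n \<le> m") (auto simp: dist_commute)
      qed
    qed
    have "Cauchy P" by (rule cauchy_gen) (use Ptail in blast)
    then obtain Pl where Pl: "P \<longlonglongrightarrow> Pl" using compl unfolding complete_def by blast
    have "Cauchy Q" by (rule cauchy_gen) (use Qtail in blast)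
    then obtain Ql where Ql: "Q \<longlonglongrightarrow> Ql" using compl unfolding complete_def by blast
    have limgen: "Fl - F k \<in> K \<and> norm (Fl - F k) \<le> 2 * (1/2)^k"
      if Fl: "F \<longlonglongrightarrow> Fl" and tl: "\<And>m. F (k + m) - F k \<in> K \<and> norm (F (k + m) - F k) \<le> 2 * (1/2::real)^k - 2 * (1/2)^(k+m)"
      for F Fl k
    proof -
      have l1: "(\<lambda>m. F (k + m) - F k) \<longlonglongrightarrow> Fl - F k"
        using tendsto_diff[OF LIMSEQ_ignore_initial_segment[OF Fl, of k] tendsto_const[of "F k"]]
        by (simp add: add.commute)
      have "Fl - F k \<in> K"
        proof -
        have "\<forall>m. F (k + m) - F k \<in> K" using tl by blast
        then show ?thesis
          using clK[unfolded closed_sequential_limits, rule_format, of "\<lambda>m. F (k + m) - F k" "Fl - F k"] l1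
          unfolding K_def by blast
      qed
      moreover have "norm (Fl - F k) \<le> 2 * (1/2)^k"
      proof (rule LIMSEQ_le_const2[OF tendsto_norm[OF l1]])
        show "\<exists>N. \<forall>n\<ge>N. norm (F (k + n) - F k) \<le> 2 * (1/2)^k"
        proof (intro exI[of _ 0] allI impI)
          fix n :: nat
          show "norm (F (k + n) - F k) \<le> 2 * (1/2)^k"
            using tl[of n] zero_le_power[of "1/2::real" "k + n"] by linarith
        qed
      qed
      ultimately show ?thesis by blast
    qed
    have Pl_tail: "Pl - P k \<in> K \<and> norm (Pl - P k) \<le> 2 * (1/2)^k" for k
      by (rule limgen[OF Pl]) (use Ptail in blast)
    have Ql_tail: "Ql - Q k \<in> K \<and> norm (Ql - Q k) \<le> 2 * (1/2)^k" for k
      by (rule limgen[OF Ql]) (use Qtail in blast)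
    have tele: "x (\<phi> k) = x (\<phi> 0) + P k - Q k" for k
    proof (induction k)
      case 0 then show ?case by (simp add: P_def Q_def)
    next
      case (Suc k)
      have "x (\<phi> (Suc k)) = x (\<phi> k) + p k - q k" using pq[of k] by (simp add: algebra_simps)
      then show ?case using Suc by (simp add: P_def Q_def algebra_simps)
    qed
    obtain a0 b0 where ab0: "a0 \<in> K" "b0 \<in> K" "x (\<phi> 0) = a0 - b0" using xin[of "\<phi> 0"] unfolding V_def by blast
    define y where "y = x (\<phi> 0) + Pl - Ql"
    have PlK: "Pl \<in> K" using Pl_tail[of 0] by (simp add: P_def)
    have QlK: "Ql \<in> K" using Ql_tail[of 0] by (simp add: Q_def)
    have yV: "y = (a0 + Pl) - (b0 + Ql)" unfolding y_def using ab0 by (simp add: algebra_simps)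
    have "y \<in> V" unfolding V_def using yV Kadd ab0 PlK QlK by blast
    moreover have "(\<lambda>n. N (x n - y)) \<longlonglongrightarrow> 0"
    proof (rule LIMSEQ_I)
      fix e :: real assume "e > 0"
      then obtain k where k: "(1/2::real)^k < e/5" using real_arch_pow_inv[of "e/5" "1/2"] by auto
      show "\<exists>no. \<forall>n\<ge>no. norm (N (x n - y) - 0) < e"
      proof (intro exI allI impI)
        fix n assume n: "n \<ge> \<phi> k"
        obtain a b where ab: "a \<in> K" "b \<in> K" "x n - x (\<phi> k) = a - b"
          using Vdiff[OF xin xin] by blast
        have "N (a - b) < (1/2)^k" using subq[OF n] ab by simp
        then obtain p' q' where pq': "p' \<in> K" "q' \<in> K" "a - b = p' - q'" "norm p' + norm q' < (1/2)^k"
          using P2[OF ab(1,2)] by blast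
        have xy: "x n - y = (p' + (Ql - Q k)) - (q' + (Pl - P k))"
          using ab pq' tele[of k] unfolding y_def by (simp add: algebra_simps)
        have K1: "p' + (Ql - Q k) \<in> K" "q' + (Pl - P k) \<in> K"
          using Kadd pq' Pl_tail Ql_tail by auto
        have "N (x n - y) \<le> norm (p' + (Ql - Q k)) + norm (q' + (Pl - P k))"
          unfolding xy by (rule P1[OF K1])
        also have "\<dots> \<le> (norm p' + norm (Ql - Q k)) + (norm q' + norm (Pl - P k))"
          by (intro add_mono norm_triangle_ineq)
        also have "\<dots> < 5 * (1/2)^k" using pq'(4) Pl_tail[of k] Ql_tail[of k] by linarith
        also have "\<dots> < e" using k by simp
        finally have lt: "N (x n - y) < e" .
        have "0 \<le> N (x n - y)" unfolding xy by (rule P3[OF K1])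
        then show "norm (N (x n - y) - 0) < e" using lt by simp
      qed
    qed
    ultimately show ?thesis unfolding V_def K_def N_def by blast
  qed
qed


theorem lemmaC9:
  fixes \<Omega> \<Omega>o :: "'v::real_normed_vector set"
  assumes "base_normed_space \<Omega>"
    and "closed (gen_cone \<Omega>)"
    and "\<Omega>o \<subseteq> \<Omega>" and "convex \<Omega>o" and "closed \<Omega>o"
  shows "closed (gen_cone \<Omega>o) \<and>
         (complete (UNIV :: 'v set) \<longrightarrow>
            complete_wrt (base_norm \<Omega>o)
              {a - b | a b. a \<in> gen_cone \<Omega>o \<and> b \<in> gen_cone \<Omega>o})"
proof (cases "0 \<in> \<Omega>")
  case True
  have triv: "\<And>z::'v. z = 0" using trivial_case[OF assms(1) True] .
  have cl: "closed (S :: 'v set)" for S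
  proof (cases "S = {}")
    case True then show ?thesis by simp
  next
    case False
    then obtain z where "z \<in> S" by blast
    then have "S = {0}" using triv[of z] triv by (metis empty_iff insertI1 subsetI subset_antisym singletonD)
    then show ?thesis by simp
  qed
  have cw: "complete_wrt (base_norm \<Omega>o) {a - b | a b. a \<in> gen_cone \<Omega>o \<and> b \<in> gen_cone \<Omega>o}"
    unfolding complete_wrt_def
  proof (intro allI impI, elim conjE)
    fix x :: "nat \<Rightarrow> 'v"
    assume xin: "\<forall>n. x n \<in> {a - b | a b. a \<in> gen_cone \<Omega>o \<and> b \<in> gen_cone \<Omega>o}"
    obtain c where c: "c \<in> \<Omega>o" using xin unfolding gen_cone_def by blast
    have "base_norm \<Omega>o (0 *\<^sub>R c - 0 *\<^sub>R c) \<le> 0 + 0" by (rule bn_le[OF c c]) auto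
    moreover have "0 \<le> base_norm \<Omega>o (0 *\<^sub>R c - 0 *\<^sub>R c)" by (rule bn_ge0[OF c c]) auto
    ultimately have z: "base_norm \<Omega>o (x n - x 0) = 0" for n
      using triv[of "x n - x 0"] by simp
    show "\<exists>y\<in>{a - b | a b. a \<in> gen_cone \<Omega>o \<and> b \<in> gen_cone \<Omega>o}. (\<lambda>n. base_norm \<Omega>o (x n - y)) \<longlonglongrightarrow> 0"
      using xin z by (intro bexI[of _ "x 0"]) auto
  qed
  show ?thesis using cl cw by blast
next
  case False
  have cl: "closed (gen_cone \<Omega>o)" by (rule closed_part[OF assms(1) False assms(3) assms(5)])
  then show ?thesis using complete_part[OF assms(1) False assms(3) assms(4) cl] by blast
qed

end
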